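(* Suppose $(T_i,U_i)$, $i=1,\dots,n$, are generated independently from the first level of the model with fixed primary parameters $\theta^\star=(\theta_1^\star,\dots,\theta_n^\star)$ and fixed nuisance parameters $\nu^\star=(\nu_1^\star,\dots,\nu_n^\star)$, and that Assumption 1 holds. Let $G(\nu^\star):=\frac1n\sum_{i=1}^n\delta_{\nu_i^\star}$. Then $P^{\mathrm{or}}(T_i,U_i,G(\nu^\star))$, $i=1,\dots,n$, are compound p-values, i.e. $$\sup_{\alpha\in[0,1]}\Big(\frac1n\sum_{i\in\mathcal H_0}\mathbb P_{\nu^\star,\theta^\star}\big(P^{\mathrm{or}}(T_i,U_i,G(\nu^\star))\le\alpha\big)-\alpha\Big)_+\le0,$$ where $(x)_+=\max(x,0)$.
   Context: Setup: unit $i$'s data are summarized by $T_i\in\mathbb R$ and $U_i\in\mathcal U$; conditionally on parameters the pairs are independent, the law of $(T_i,U_i)$ depends only on $(\theta_i,\nu_i)$ through a common kernel, and the law of $U_i$ depends only on $\nu_i\in\mathcal V$. A null value $\theta_0$ is fixed, $\mathcal H_0=\{i:\theta_i^\star=\theta_0\}$. For a probability measure $G$ on $\mathcal V$, $P^{\mathrm{or}}(t,u,G):=\mathbb P(|T|\ge|t|\mid U=u)$ where $(T,U)$ is drawn with $\theta=\theta_0$ and $\nu\sim G$. $\mathbb P_{\nu^\star,\theta^\star}$ denotes probability with all parameters fixed. Assumption 1: for all $\nu,u$, the conditional law of $T_i$ given $\nu_i=\nu,U_i=u$ (under $\theta_i=\theta_0$) is absolutely continuous w.r.t. Lebesgue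 measure. *)

theory Defs
  imports "HOL-Probability.Probability"
begin

text \<open>
  A version of the oracle conditional tail probability
  P^or(t,u,G) = P(|T| >= |t| given U = u), where (T,U) is drawn with theta = theta0
  and nu ~ G, for the empirical distribution G = (1/n) sum_i delta_(nus i).
  Here K0 nu is the law of (T,U) under theta = theta0 and nuisance nu, and Q nu
  is the law of U under nuisance nu.  The joint law under the mixture is
  (1/n) sum_i K0 (nus i) and the U-marginal is (1/n) sum_i Q (nus i).
\<close>
definition oracle_pvalue_version ::
  "('v \<Rightarrow> (real \<times> 'u) measure) \<Rightarrow> 'u measure \<Rightarrow> ('v \<Rightarrow> 'u measure)
    \<Rightarrow> nat \<Rightarrow> (nat \<Rightarrow> 'v) \<Rightarrow> (real \<Rightarrow> 'u \<Rightarrow> real) \<Rightarrow> bool" where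
  "oracle_pvalue_version K0 MU Q n nus g \<longleftrightarrow>
     (\<lambda>(t, u). g t u) \<in> borel_measurable (borel \<Otimes>\<^sub>M MU) \<and>
     (\<forall>t u. 0 \<le> g t u) \<and>
     (\<forall>t. \<forall>B\<in>sets MU.
        ennreal (1 / real n) * (\<Sum>i<n. emeasure (K0 (nus i)) ({s. \<bar>t\<bar> \<le> \<bar>s\<bar>} \<times> B))
        = ennreal (1 / real n) * (\<Sum>i<n. \<integral>\<^sup>+ u\<in>B. ennreal (g t u) \<partial>(Q (nus i))))"

end

theory Submission
  imports Defs
begin

lemma survival_bound:
  fixes m :: "nat \<Rightarrow> real measure" and c :: "nat \<Rightarrow> ennreal" and \<beta> :: ennreal
    and I :: "nat set"
  assumes sets_m: "\<And>i. i \<in> I \<Longrightarrow> sets (m i) = sets borel" and fin: "finite I"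
  shows "(\<Sum>i\<in>I. c i * emeasure (m i) {t. (\<Sum>i\<in>I. c i * emeasure (m i) {s. \<bar>t\<bar> \<le> \<bar>s\<bar>}) \<le> \<beta>}) \<le> \<beta>"
proof -
  define G where "G x = (\<Sum>i\<in>I. c i * emeasure (m i) {s. x \<le> \<bar>s\<bar>})" for x :: real
  have meas: "{s::real. x \<le> \<bar>s\<bar>} \<in> sets (m i)" if "i \<in> I" for x i
    using sets_m[OF that] by simp
  have meas2: "{s::real. x < \<bar>s\<bar>} \<in> sets (m i)" if "i \<in> I" for x i
    using sets_m[OF that] by simp
  have Gmono: "G y \<le> G x" if "x \<le> y" for x y
    unfolding G_def
    by (intro sum_mono mult_left_mono emeasure_mono meas) (use that in auto)
  define E where "E = {t::real. G \<bar>t\<bar> \<le> \<beta>}"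
  have goal: "(\<Sum>i\<in>I. c i * emeasure (m i) E) \<le> \<beta>"
  proof (cases "E = {}")
    case True
    then show ?thesis by simp
  next
    case False
    define c0 where "c0 = Inf (abs ` E)"
    have bdd: "bdd_below (abs ` E)" by (rule bdd_belowI[of _ 0]) auto
    have lower: "c0 \<le> \<bar>t\<bar>" if "t \<in> E" for t
      unfolding c0_def using bdd that by (intro cInf_lower) auto
    have upc: "\<bar>t\<bar> \<in> abs ` E" if "c0 < \<bar>t\<bar>" for t
    proof -
      have "\<exists>y\<in>abs ` E. y < \<bar>t\<bar>"
        using that False bdd unfolding c0_def by (subst cInf_less_iff[symmetric]) auto
      then obtain t' where t': "t' \<in> E" "\<bar>t'\<bar> < \<bar>t\<bar>" by auto
      then have "G \<bar>t\<bar> \<le> \<beta>" using Gmono[of "\<bar>t'\<bar>" "\<bar>t\<bar>"] unfolding E_def by auto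
      then show ?thesis unfolding E_def by force
    qed
    have c0nn: "0 \<le> c0" unfolding c0_def using False by (intro cInf_greatest) auto
    have Gup: "G x \<le> \<beta>" if "c0 < x" for x
    proof -
      have "\<bar>x\<bar> = x" using that c0nn by auto
      then show ?thesis using upc[of x] that by (auto simp: E_def)
    qed
    show ?thesis
    proof (cases "c0 \<in> abs ` E")
      case True
      then obtain t0 where t0: "t0 \<in> E" "\<bar>t0\<bar> = c0" by auto
      have "E = {t. c0 \<le> \<bar>t\<bar>}"
      proof safe
        fix t assume "c0 \<le> \<bar>t\<bar>"
        then have "G \<bar>t\<bar> \<le> G \<bar>t0\<bar>" using Gmono t0 by auto
        then show "t \<in> E" using t0 by (auto simp: E_def)
      qed (use lower in auto)
      moreover have "G c0 \<le> \<beta>" using t0 by (auto simp: E_def)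
      ultimately show ?thesis by (simp add: G_def)
    next
      case False
      have Eeq: "E = {t. c0 < \<bar>t\<bar>}"
      proof safe
        fix t assume "t \<in> E"
        then show "c0 < \<bar>t\<bar>" using lower[of t] False by force
      next
        fix t assume "c0 < \<bar>t\<bar>" then show "t \<in> E" using upc[of t] by (force simp: E_def)
      qed
      define Ek where "Ek k = {t::real. c0 + 1 / real (Suc k) \<le> \<bar>t\<bar>}" for k
      have inc: "incseq Ek"
        unfolding Ek_def incseq_def
        by (auto simp: frac_le intro: order_trans[rotated])
      have UE: "(\<Union>k. Ek k) = E"
      proof safe
        fix t k assume "t \<in> Ek k" then show "t \<in> E"
          unfolding Eeq Ek_def
          by (auto intro: less_le_trans[rotated])
      next
        fix t assume "t \<in> E"
        then have "0 < \<bar>t\<bar> - c0" unfolding Eeq by auto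
        then obtain k where "1 / real (Suc k) < \<bar>t\<bar> - c0"
          using nat_approx_posE by blast
        then show "t \<in> (\<Union>k. Ek k)" unfolding Ek_def by (auto intro!: exI[of _ k])
      qed
      have "(\<Sum>i\<in>I. c i * emeasure (m i) E) = (\<Sum>i\<in>I. c i * (SUP k. emeasure (m i) (Ek k)))"
      proof (intro sum.cong refl arg_cong2[where f="(*)"])
        fix i assume i: "i \<in> I"
        have "range Ek \<subseteq> sets (m i)" using meas[OF i] by (auto simp: Ek_def)
        then show "emeasure (m i) E = (SUP k. emeasure (m i) (Ek k))"
          using inc by (simp add: SUP_emeasure_incseq UE)
      qed
      also have "\<dots> = (\<Sum>i\<in>I. SUP k. c i * emeasure (m i) (Ek k))"
        by (simp add: SUP_mult_left_ennreal)
      also have "\<dots> = (SUP k. \<Sum>i\<in>I. c i * emeasure (m i) (Ek k))"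
      proof (rule ennreal_SUP_sum[symmetric])
        fix i assume "i \<in> I"
        then show "incseq (\<lambda>k. c i * emeasure (m i) (Ek k))"
          using inc meas unfolding incseq_def
          by (intro allI impI mult_left_mono emeasure_mono) (auto simp: Ek_def)
      qed
      also have "\<dots> \<le> \<beta>"
      proof (rule SUP_least)
        fix k
        have "(\<Sum>i\<in>I. c i * emeasure (m i) (Ek k)) = G (c0 + 1 / real (Suc k))"
          by (simp add: G_def Ek_def)
        also have "\<dots> \<le> \<beta>" by (rule Gup) auto
        finally show "(\<Sum>i\<in>I. c i * emeasure (m i) (Ek k)) \<le> \<beta>" .
      qed
      finally show ?thesis .
    qed
  qed
  then show ?thesis by (simp add: E_def G_def)
qed

lemma disint_ext:
  fixes K :: "(real \<times> 'u) measure" and MU :: "'u measure" and Qm :: "'u measure"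
    and kap :: "'u \<Rightarrow> real measure"
  assumes Kp: "prob_space K" and Ks: "sets K = sets (borel \<Otimes>\<^sub>M MU)"
    and Qp: "prob_space Qm" and Qs: "sets Qm = sets MU"
    and kap: "kap \<in> MU \<rightarrow>\<^sub>M prob_algebra borel"
    and dis: "\<And>A B. A \<in> sets borel \<Longrightarrow> B \<in> sets MU \<Longrightarrow>
           emeasure K (A \<times> B) = (\<integral>\<^sup>+ u\<in>B. emeasure (kap u) A \<partial>Qm)"
    and C: "C \<in> sets (borel \<Otimes>\<^sub>M MU)"
  shows "emeasure K C = (\<integral>\<^sup>+ u. emeasure (kap u) ((\<lambda>t. (t, u)) -` C) \<partial>Qm)"
proof -
  have kap': "kap \<in> Qm \<rightarrow>\<^sub>M subprob_algebra borel"
    using measurable_prob_algebraD[OF kap] by (simp cong: measurable_cong_sets add: Qs)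
  define D where "D u = distr (kap u) (borel \<Otimes>\<^sub>M MU) (\<lambda>t. (t, u))" for u
  have Dm: "D \<in> Qm \<rightarrow>\<^sub>M subprob_algebra (borel \<Otimes>\<^sub>M MU)"
    unfolding D_def
  proof (rule measurable_distr2[OF _ kap'])
    show "(\<lambda>(u, t). (t, u)) \<in> Qm \<Otimes>\<^sub>M borel \<rightarrow>\<^sub>M borel \<Otimes>\<^sub>M MU"
      by (simp add: Qs cong: measurable_cong_sets sets_pair_measure_cong) measurable
  qed
  have sk: "sets (kap u) = sets borel" if "u \<in> space MU" for u
    using measurable_space[OF kap that] by (simp add: space_prob_algebra)
  then have spk: "space (kap u) = UNIV" if "u \<in> space MU" for u
    using sk[OF that] sets_eq_imp_space_eq[of "kap u" borel] by simp
  have spQ: "space Qm = space MU" using Qs by (rule sets_eq_imp_space_eq)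
  have ne: "space Qm \<noteq> {}" using Qp prob_space.not_empty by blast
  define L where "L = Qm \<bind> D"
  have eL: "emeasure L X = (\<integral>\<^sup>+ u. emeasure (kap u) ((\<lambda>t. (t, u)) -` X) \<partial>Qm)"
    if X: "X \<in> sets (borel \<Otimes>\<^sub>M MU)" for X
    unfolding L_def
  proof (subst emeasure_bind[OF ne Dm X], intro nn_integral_cong)
    fix u assume u: "u \<in> space Qm"
    then have u': "u \<in> space MU" using spQ by simp
    have "(\<lambda>t. (t, u)) \<in> kap u \<rightarrow>\<^sub>M borel \<Otimes>\<^sub>M MU"
      using u' by (simp add: sk cong: measurable_cong_sets) 
    then show "emeasure (D u) X = emeasure (kap u) ((\<lambda>t. (t, u)) -` X)"
      unfolding D_def using X u' by (simp add: emeasure_distr spk)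
  qed
  have KL: "K = L"
  proof (rule measure_eqI_generator_eq[OF Int_stable_pair_measure_generator[of borel MU]])
    show "{a \<times> b |a b. a \<in> sets borel \<and> b \<in> sets MU} \<subseteq> Pow (space borel \<times> space MU)"
      using sets.sets_into_space by fastforce
    show "sets K = sigma_sets (space borel \<times> space MU) {a \<times> b |a b. a \<in> sets borel \<and> b \<in> sets MU}"
      using Ks by (simp add: sets_pair_measure)
    have "sets L = sets (borel \<Otimes>\<^sub>M MU)"
      unfolding L_def
      by (rule sets_bind[OF _ ne]) (use measurable_space[OF Dm] in \<open>auto simp: space_subprob_algebra\<close>)
    then show "sets L = sigma_sets (space borel \<times> space MU) {a \<times> b |a b. a \<in> sets borel \<and> b \<in> sets MU}"
      by (simp add: sets_pair_measure)
    fix X :: "(real \<times> 'u) set" assume "X \<in> {a \<times> b |a b. a \<in> sets borel \<and> b \<in> sets MU}"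
    then obtain a b where ab: "X = a \<times> b" "a \<in> sets borel" "b \<in> sets MU" by auto
    have "emeasure L X = (\<integral>\<^sup>+ u. emeasure (kap u) ((\<lambda>t. (t, u)) -` X) \<partial>Qm)"
      using ab by (intro eL) auto
    also have "\<dots> = (\<integral>\<^sup>+ u\<in>b. emeasure (kap u) a \<partial>Qm)"
      by (intro nn_integral_cong) (auto simp: ab indicator_def)
    also have "\<dots> = emeasure K X" using dis ab by simp
    finally show "emeasure K X = emeasure L X" ..
  next
    show "range (\<lambda>i::nat. UNIV \<times> space MU) \<subseteq> {a \<times> b |a b. a \<in> sets borel \<and> b \<in> sets MU}"
      by (auto intro!: exI[of _ UNIV] exI[of _ "space MU"])
    show "(\<Union>i::nat. UNIV \<times> space MU) = space borel \<times> space MU" by simp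
    show "emeasure K (UNIV \<times> space MU) \<noteq> \<infinity>" for i :: nat
    proof -
      interpret prob_space K by (rule Kp)
      show ?thesis using emeasure_finite[of "UNIV \<times> space MU"] by simp
    qed
  qed
  show ?thesis using eL[OF C] KL by simp
qed

theorem proposition5:
  fixes K :: "'th \<Rightarrow> 'v \<Rightarrow> (real \<times> 'u) measure"
    and MU :: "'u measure"
    and Q :: "'v \<Rightarrow> 'u measure"
    and \<kappa> :: "'v \<Rightarrow> 'u \<Rightarrow> real measure"
    and \<theta>0 :: 'th
    and n :: nat
    and \<theta>s :: "nat \<Rightarrow> 'th"
    and \<nu>s :: "nat \<Rightarrow> 'v"
    and Por :: "real \<Rightarrow> 'u \<Rightarrow> real"
  assumes kernel_prob: "\<And>\<theta> \<nu>. prob_space (K \<theta> \<nu>)"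
    and kernel_sets: "\<And>\<theta> \<nu>. sets (K \<theta> \<nu>) = sets (borel \<Otimes>\<^sub>M MU)"
    and U_law: "\<And>\<theta> \<nu>. distr (K \<theta> \<nu>) MU snd = Q \<nu>"
    and cond_kernel: "\<And>\<nu>. \<kappa> \<nu> \<in> MU \<rightarrow>\<^sub>M prob_algebra borel"
    and disintegration: "\<And>\<nu> A B. A \<in> sets borel \<Longrightarrow> B \<in> sets MU \<Longrightarrow>
           emeasure (K \<theta>0 \<nu>) (A \<times> B) = (\<integral>\<^sup>+ u\<in>B. emeasure (\<kappa> \<nu> u) A \<partial>(Q \<nu>))"
    and assumption1: "\<And>\<nu> u. u \<in> space MU \<Longrightarrow> absolutely_continuous lborel (\<kappa> \<nu> u)"
    and n_pos: "0 < n"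
    and Por_def: "oracle_pvalue_version (K \<theta>0) MU Q n \<nu>s Por"
  shows "(SUP \<alpha>\<in>{0..1::real}.
            max ((1 / real n) *
                 (\<Sum>i\<in>{i. i < n \<and> \<theta>s i = \<theta>0}.
                    measure (PiM {..<n} (\<lambda>i. K (\<theta>s i) (\<nu>s i)))
                      {\<omega> \<in> space (PiM {..<n} (\<lambda>i. K (\<theta>s i) (\<nu>s i))).
                         Por (fst (\<omega> i)) (snd (\<omega> i)) \<le> \<alpha>}) - \<alpha>) 0) \<le> 0"
  proof -
  define K0 where "K0 i = K \<theta>0 (\<nu>s i)" for i
  define Qi where "Qi i = Q (\<nu>s i)" for i
  define kp where "kp i = \<kappa> (\<nu>s i)" for i
  have snd_meas: "snd \<in> K \<theta> \<nu> \<rightarrow>\<^sub>M MU" for \<theta> \<nu>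
    using measurable_snd[of borel MU] by (simp add: kernel_sets cong: measurable_cong_sets)
  have Q_prob: "prob_space (Q \<nu>)" for \<nu>
    using prob_space.prob_space_distr[OF kernel_prob snd_meas] U_law by metis
  have Q_sets: "sets (Q \<nu>) = sets MU" for \<nu>
    using U_law[of \<theta>0 \<nu>] by (metis sets_distr)
  have Q_space: "space (Q \<nu>) = space MU" for \<nu>
    using Q_sets by (rule sets_eq_imp_space_eq)
  have kp_sub: "\<kappa> \<nu> \<in> MU \<rightarrow>\<^sub>M subprob_algebra borel" for \<nu>
    by (rule measurable_prob_algebraD[OF cond_kernel])
  have k_sets: "sets (\<kappa> \<nu> u) = sets borel" if "u \<in> space MU" for \<nu> u
    using measurable_space[OF cond_kernel that] by (simp add: space_prob_algebra)
  have k_prob: "prob_space (\<kappa> \<nu> u)" if "u \<in> space MU" for \<nu> u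
    using measurable_space[OF cond_kernel that] by (simp add: space_prob_algebra)
  have Pm: "(\<lambda>(t, u). Por t u) \<in> borel_measurable (borel \<Otimes>\<^sub>M MU)"
    using Por_def unfolding oracle_pvalue_version_def by blast
  have Pm2[measurable]: "(\<lambda>x. Por (fst x) (snd x)) \<in> borel_measurable (borel \<Otimes>\<^sub>M MU)"
    using Pm by (simp add: case_prod_beta')
  have Pt: "Por t \<in> borel_measurable MU" for t
    using measurable_Pair2[OF Pm, of t] by simp
  have Pu: "(\<lambda>t. Por t u) \<in> borel_measurable borel" if "u \<in> space MU" for u
    using measurable_Pair1[OF Pm that] by simp
  define S where "S t = {s::real. \<bar>t\<bar> \<le> \<bar>s\<bar>}" for t :: real
  have S_sets: "S t \<in> sets borel" for t unfolding S_def by simp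

  define Qb where "Qb = count_space {..<n} \<bind> Qi"
  have Qi_k: "Qi \<in> count_space {..<n} \<rightarrow>\<^sub>M subprob_algebra MU"
    using Q_prob by (auto simp: Qi_def space_subprob_algebra Q_sets intro: prob_space_imp_subprob_space)
  have ne: "space (count_space {..<n}) \<noteq> {}" using n_pos by auto
  have Qb_sets: "sets Qb = sets MU" unfolding Qb_def
    by (rule sets_bind[OF _ ne]) (simp add: Qi_def Q_sets)
  have Qb_space: "space Qb = space MU"
    using Qb_sets by (rule sets_eq_imp_space_eq)
  have Qb_int: "(\<integral>\<^sup>+u. f u \<partial>Qb) = (\<Sum>i<n. \<integral>\<^sup>+u. f u \<partial>Qi i)" if "f \<in> borel_measurable MU" for f
    unfolding Qb_def using nn_integral_bind[OF that Qi_k] by (simp add: nn_integral_count_space_finite)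
  have Qb_em: "emeasure Qb B = (\<Sum>i<n. emeasure (Qi i) B)" if B: "B \<in> sets MU" for B
  proof -
    have "emeasure Qb B = (\<integral>\<^sup>+u. indicator B u \<partial>Qb)"
      using B Qb_sets by simp
    also have "\<dots> = (\<Sum>i<n. \<integral>\<^sup>+u. indicator B u \<partial>Qi i)"
      using B by (intro Qb_int) simp
    also have "\<dots> = (\<Sum>i<n. emeasure (Qi i) B)"
      using B by (simp add: Qi_def Q_sets)
    finally show ?thesis .
  qed
  have Qb_tot: "emeasure Qb (space Qb) = ennreal (real n)"
  proof -
    have "emeasure Qb (space Qb) = (\<Sum>i<n. emeasure (Qi i) (space MU))"
      using Qb_em[of "space MU"] by (simp add: Qb_space)
    also have "\<dots> = (\<Sum>i<n. 1)"
      by (intro sum.cong refl) (metis Q_prob Q_space Qi_def prob_space.emeasure_space_1)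
    finally show ?thesis by (simp add: ennreal_of_nat_eq_real_of_nat)
  qed
  interpret Qb: finite_measure Qb
    by (rule finite_measureI) (simp add: Qb_tot)
  have ac: "absolutely_continuous Qb (Qi i)" if i: "i < n" for i
    unfolding absolutely_continuous_def
  proof
    fix B assume "B \<in> null_sets Qb"
    then have B0: "B \<in> sets MU" "emeasure Qb B = 0"
      using Qb_sets by auto
    then have B: "B \<in> sets MU" "(\<Sum>j<n. emeasure (Qi j) B) = 0"
      using Qb_em[OF B0(1)] by auto
    then have "emeasure (Qi i) B = 0" using i by (simp add: sum_eq_0_iff)
    then show "B \<in> null_sets (Qi i)" using B by (simp add: Qi_def Q_sets null_sets_def)
  qed
  define w where "w i = RN_deriv Qb (Qi i)" for i
  have w_meas[measurable]: "w i \<in> borel_measurable MU" for i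
    using borel_measurable_RN_deriv[of Qb "Qi i"] unfolding w_def
    by (simp add: Qb_sets cong: measurable_cong_sets)
  have w_int: "(\<integral>\<^sup>+u. f u \<partial>Qi i) = (\<integral>\<^sup>+u. w i u * f u \<partial>Qb)"
    if "i < n" "f \<in> borel_measurable MU" for i f
    unfolding w_def
    by (rule Qb.RN_deriv_nn_integral[OF ac[OF that(1)]])
       (use that(2) in \<open>simp_all add: Qi_def Q_sets Qb_sets cong: measurable_cong_sets\<close>)
  \<comment> \<open>the true conditional survival function of the mixture\<close>
  define F where "F t u = (\<Sum>i<n. w i u * emeasure (kp i u) (S t))" for t u
  have kS_meas: "(\<lambda>x. emeasure (\<kappa> \<nu> (snd x)) (S (fst x))) \<in> borel_measurable (borel \<Otimes>\<^sub>M MU)" for \<nu>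
  proof (rule emeasure_measurable_subprob_algebra2[where N=borel])
    have "(SIGMA x:space (borel \<Otimes>\<^sub>M MU). S (fst x)) =
        {p \<in> space ((borel \<Otimes>\<^sub>M MU) \<Otimes>\<^sub>M borel). \<bar>fst (fst p)\<bar> \<le> \<bar>snd p\<bar>}"
      by (auto simp: S_def space_pair_measure)
    also have "\<dots> \<in> sets ((borel \<Otimes>\<^sub>M MU) \<Otimes>\<^sub>M borel)" by measurable
    finally show "(SIGMA x:space (borel \<Otimes>\<^sub>M MU). S (fst x)) \<in> sets ((borel \<Otimes>\<^sub>M MU) \<Otimes>\<^sub>M borel)" .
    show "(\<lambda>x. \<kappa> \<nu> (snd x)) \<in> borel \<Otimes>\<^sub>M MU \<rightarrow>\<^sub>M subprob_algebra borel"
      by (rule measurable_compose[OF measurable_snd kp_sub])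
  qed
  have F_meas: "(\<lambda>x. F (fst x) (snd x)) \<in> borel_measurable (borel \<Otimes>\<^sub>M MU)"
    unfolding F_def kp_def using kS_meas by measurable
  have Ft: "F t \<in> borel_measurable MU" for t
    using measurable_Pair2[OF F_meas, of t] by simp
  have Fu: "(\<lambda>t. F t u) \<in> borel_measurable borel" if "u \<in> space MU" for u
    using measurable_Pair1[OF F_meas that] by simp
  have AEt: "AE u in Qb. F t u = ennreal (Por t u)" for t
  proof -
    have eq: "(\<Sum>i<n. emeasure (K0 i) (S t \<times> B)) = (\<Sum>i<n. \<integral>\<^sup>+u\<in>B. ennreal (Por t u) \<partial>Qi i)"
      if B: "B \<in> sets MU" for B
    proof -
      from Por_def B have "ennreal (1 / real n) * (\<Sum>i<n. emeasure (K0 i) (S t \<times> B)) =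
          ennreal (1 / real n) * (\<Sum>i<n. \<integral>\<^sup>+u\<in>B. ennreal (Por t u) \<partial>Qi i)"
        unfolding oracle_pvalue_version_def K0_def Qi_def S_def by blast
      then have "ennreal (real n) * (ennreal (1 / real n) * (\<Sum>i<n. emeasure (K0 i) (S t \<times> B))) =
          ennreal (real n) * (ennreal (1 / real n) * (\<Sum>i<n. \<integral>\<^sup>+u\<in>B. ennreal (Por t u) \<partial>Qi i))"
        by simp
      moreover have "ennreal (real n) * ennreal (1 / real n) = 1"
        using n_pos by (simp add: ennreal_mult[symmetric])
      ultimately show ?thesis by (simp add: mult.assoc[symmetric])
    qed
    have "density Qb (F t) = density Qb (\<lambda>u. ennreal (Por t u))"
    proof (rule measure_eqI)
      show "sets (density Qb (F t)) = sets (density Qb (\<lambda>u. ennreal (Por t u)))" by simp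
      fix B assume "B \<in> sets (density Qb (F t))"
      then have B: "B \<in> sets MU" by (simp add: Qb_sets)
      have FtQ: "F t \<in> borel_measurable Qb" using Ft by (simp add: Qb_sets cong: measurable_cong_sets)
      have PtQ: "(\<lambda>u. ennreal (Por t u)) \<in> borel_measurable Qb"
        using Pt by (simp add: Qb_sets cong: measurable_cong_sets)
      have kpm: "(\<lambda>u. emeasure (kp i u) (S t)) \<in> borel_measurable MU" for i
        unfolding kp_def by (rule measurable_emeasure_kernel[OF kp_sub S_sets])
      have "emeasure (density Qb (F t)) B = (\<integral>\<^sup>+u. F t u * indicator B u \<partial>Qb)"
        using B FtQ by (simp add: emeasure_density Qb_sets)
      also have "\<dots> = (\<integral>\<^sup>+u. (\<Sum>i<n. w i u * (emeasure (kp i u) (S t) * indicator B u)) \<partial>Qb)"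
        unfolding F_def by (simp add: sum_distrib_right mult.assoc)
      also have "\<dots> = (\<Sum>i<n. \<integral>\<^sup>+u. w i u * (emeasure (kp i u) (S t) * indicator B u) \<partial>Qb)"
        using B kpm by (intro nn_integral_sum) (simp_all add: Qb_sets cong: measurable_cong_sets)
      also have "\<dots> = (\<Sum>i<n. \<integral>\<^sup>+u. emeasure (kp i u) (S t) * indicator B u \<partial>Qi i)"
        using B kpm by (intro sum.cong refl w_int[symmetric]) auto
      also have "\<dots> = (\<Sum>i<n. emeasure (K0 i) (S t \<times> B))"
        using B by (intro sum.cong refl) (simp add: disintegration[OF S_sets B] K0_def kp_def Qi_def mult.commute)
      also have "\<dots> = (\<Sum>i<n. \<integral>\<^sup>+u. ennreal (Por t u) * indicator B u \<partial>Qi i)"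
        using eq[OF B] by (simp add: mult.commute)
      also have "\<dots> = (\<integral>\<^sup>+u. ennreal (Por t u) * indicator B u \<partial>Qb)"
        using B Pt by (intro Qb_int[symmetric]) simp
      also have "\<dots> = emeasure (density Qb (\<lambda>u. ennreal (Por t u))) B"
        using B PtQ by (simp add: emeasure_density Qb_sets)
      finally show "emeasure (density Qb (F t)) B = emeasure (density Qb (\<lambda>u. ennreal (Por t u))) B" .
    qed
    then show ?thesis
      by (rule Qb.density_unique[rotated 2])
         (use Ft Pt in \<open>simp_all add: Qb_sets cong: measurable_cong_sets\<close>)
  qed
  \<comment> \<open>Fubini: for a.e. u, the versions agree for Lebesgue-a.e. t\<close>
  interpret pq: pair_sigma_finite lborel Qb
    unfolding pair_sigma_finite_def
    using sigma_finite_lborel Qb.sigma_finite_measure_axioms by (simp add: sigma_finite_lborel)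
  have Pset: "{x \<in> space (lborel \<Otimes>\<^sub>M Qb). F (fst x) (snd x) = ennreal (Por (fst x) (snd x))}
      \<in> sets (lborel \<Otimes>\<^sub>M Qb)"
  proof -
    have e: "sets (lborel \<Otimes>\<^sub>M Qb) = sets (borel \<Otimes>\<^sub>M MU)"
      by (rule sets_pair_measure_cong) (simp_all add: Qb_sets)
    have "{x \<in> space (borel \<Otimes>\<^sub>M MU). F (fst x) (snd x) = ennreal (Por (fst x) (snd x))}
      \<in> sets (borel \<Otimes>\<^sub>M MU)"
      using F_meas by measurable
    then show ?thesis unfolding e sets_eq_imp_space_eq[OF e] .
  qed
  have "AE t in lborel. AE u in Qb. F t u = ennreal (Por t u)"
    using AEt by simp
  then have AEu: "AE u in Qb. AE t in lborel. F t u = ennreal (Por t u)"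
    using pq.AE_commute[OF Pset] by simp
  have main: "(\<Sum>i<n. emeasure (K0 i) A) \<le> ennreal \<alpha> * ennreal (real n)"
    if A_def: "A = {x \<in> space (borel \<Otimes>\<^sub>M MU). Por (fst x) (snd x) \<le> \<alpha>}" and \<alpha>: "0 \<le> \<alpha>" for A \<alpha>
  proof -
    have A: "A \<in> sets (borel \<Otimes>\<^sub>M MU)" unfolding A_def by measurable
    have secm: "(\<lambda>u. emeasure (kp i u) ((\<lambda>t. (t, u)) -` A)) \<in> borel_measurable MU" for i
    proof (rule emeasure_measurable_subprob_algebra2[where N=borel])
      have "(SIGMA u:space MU. (\<lambda>t. (t, u)) -` A) = (\<lambda>(u, t). (t, u)) -` A \<inter> space (MU \<Otimes>\<^sub>M borel)"
        using sets.sets_into_space[OF A] by (auto simp: space_pair_measure)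
      also have "\<dots> \<in> sets (MU \<Otimes>\<^sub>M borel)"
        by (rule measurable_sets[OF _ A]) measurable
      finally show "(SIGMA u:space MU. (\<lambda>t. (t, u)) -` A) \<in> sets (MU \<Otimes>\<^sub>M borel)" .
      show "kp i \<in> MU \<rightarrow>\<^sub>M subprob_algebra borel" unfolding kp_def by (rule kp_sub)
    qed
    have "(\<Sum>i<n. emeasure (K0 i) A) = (\<Sum>i<n. \<integral>\<^sup>+u. emeasure (kp i u) ((\<lambda>t. (t, u)) -` A) \<partial>Qi i)"
      unfolding K0_def kp_def Qi_def
      by (intro sum.cong refl disint_ext[OF kernel_prob kernel_sets Q_prob Q_sets cond_kernel disintegration A])
    also have "\<dots> = (\<Sum>i<n. \<integral>\<^sup>+u. w i u * emeasure (kp i u) ((\<lambda>t. (t, u)) -` A) \<partial>Qb)"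
      using secm by (intro sum.cong refl w_int) auto
    also have "\<dots> = (\<integral>\<^sup>+u. (\<Sum>i<n. w i u * emeasure (kp i u) ((\<lambda>t. (t, u)) -` A)) \<partial>Qb)"
      using secm by (intro nn_integral_sum[symmetric]) (simp_all add: Qb_sets cong: measurable_cong_sets)
    also have "\<dots> \<le> (\<integral>\<^sup>+u. ennreal \<alpha> \<partial>Qb)"
    proof (rule nn_integral_mono_AE)
      show "AE u in Qb. (\<Sum>i<n. w i u * emeasure (kp i u) ((\<lambda>t. (t, u)) -` A)) \<le> ennreal \<alpha>"
        using AEu
      proof eventually_elim
        case (elim u)
        show ?case
        proof (cases "u \<in> space MU")
          case False
          then have "(\<lambda>t. (t, u)) -` A = {}" using sets.sets_into_space[OF A]
            by (auto simp: space_pair_measure)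
          then show ?thesis by simp
        next
          case u: True
          define Nu where "Nu = {t. F t u \<noteq> ennreal (Por t u)}"
          have Nu_sets: "Nu \<in> sets borel" unfolding Nu_def
            using Fu[OF u] Pu[OF u] by measurable
          have "emeasure lborel Nu = 0"
            using elim Nu_sets by (subst (asm) AE_iff_measurable[of Nu]) (auto simp: Nu_def)
          then have Nu_null: "Nu \<in> null_sets (kp i u)" for i
            using assumption1[OF u] Nu_sets unfolding absolutely_continuous_def kp_def
            by (auto simp: null_sets_def)
          define E where "E = {t. F t u \<le> ennreal \<alpha>}"
          have E_sets: "E \<in> sets borel" unfolding E_def using Fu[OF u] by measurable
          have sub: "(\<lambda>t. (t, u)) -` A \<subseteq> E \<union> Nu"
            using u by (auto simp: A_def E_def Nu_def space_pair_measure ennreal_leI)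
          have ks: "sets (kp i u) = sets borel" for i unfolding kp_def using k_sets[OF u] .
          have le: "emeasure (kp i u) ((\<lambda>t. (t, u)) -` A) \<le> emeasure (kp i u) E" for i
          proof -
            have "emeasure (kp i u) ((\<lambda>t. (t, u)) -` A) \<le> emeasure (kp i u) (E \<union> Nu)"
              using sub E_sets Nu_sets ks by (intro emeasure_mono) auto
            also have "\<dots> = emeasure (kp i u) E"
              using E_sets ks Nu_null by (intro emeasure_Un_null_set) auto
            finally show ?thesis .
          qed
          have "(\<Sum>i<n. w i u * emeasure (kp i u) ((\<lambda>t. (t, u)) -` A)) \<le> (\<Sum>i<n. w i u * emeasure (kp i u) E)"
            by (intro sum_mono mult_left_mono le) auto
          also have "\<dots> \<le> ennreal \<alpha>"
            using survival_bound[of "{..<n}" "\<lambda>i. kp i u" "\<lambda>i. w i u" "ennreal \<alpha>"] ks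
            by (simp add: E_def F_def S_def)
          finally show ?thesis .
        qed
      qed
    qed
    also have "\<dots> = ennreal \<alpha> * ennreal (real n)"
      using Qb_tot by simp
    finally show ?thesis .
  qed
  define M' where "M' i = K (\<theta>s i) (\<nu>s i)" for i
  show ?thesis
  proof (rule cSUP_least)
    show "{0..1::real} \<noteq> {}" by simp
    fix \<alpha> :: real assume \<alpha>: "\<alpha> \<in> {0..1}"
    define A where "A = {x \<in> space (borel \<Otimes>\<^sub>M MU). Por (fst x) (snd x) \<le> \<alpha>}"
    have A: "A \<in> sets (borel \<Otimes>\<^sub>M MU)" unfolding A_def by measurable
    have spK: "space (K \<theta> \<nu>) = space (borel \<Otimes>\<^sub>M MU)" for \<theta> \<nu>
      using kernel_sets by (rule sets_eq_imp_space_eq)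
    have comp: "measure (PiM {..<n} M') {\<omega> \<in> space (PiM {..<n} M'). Por (fst (\<omega> i)) (snd (\<omega> i)) \<le> \<alpha>}
        = measure (K0 i) A" if i: "i < n" "\<theta>s i = \<theta>0" for i
    proof -
      have "{\<omega> \<in> space (PiM {..<n} M'). Por (fst (\<omega> i)) (snd (\<omega> i)) \<le> \<alpha>}
          = (\<lambda>\<omega>. \<omega> i) -` A \<inter> space (PiM {..<n} M')"
      proof -
        have "\<omega> i \<in> space (borel \<Otimes>\<^sub>M MU)" if "\<omega> \<in> space (PiM {..<n} M')" for \<omega>
          using that i spK by (auto simp: space_PiM M'_def PiE_iff)
        then show ?thesis by (auto simp: A_def)
      qed
      also have "measure (PiM {..<n} M') \<dots> = measure (distr (PiM {..<n} M') (M' i) (\<lambda>\<omega>. \<omega> i)) A"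
        using i A by (intro measure_distr[symmetric] measurable_component_singleton)
          (auto simp: M'_def kernel_sets)
      also have "distr (PiM {..<n} M') (M' i) (\<lambda>\<omega>. \<omega> i) = M' i"
        using i by (intro distr_PiM_component) (auto simp: M'_def kernel_prob)
      also have "M' i = K0 i" using i by (simp add: M'_def K0_def)
      finally show ?thesis .
    qed
    have "(\<Sum>i\<in>{i. i < n \<and> \<theta>s i = \<theta>0}. measure (PiM {..<n} M') {\<omega> \<in> space (PiM {..<n} M'). Por (fst (\<omega> i)) (snd (\<omega> i)) \<le> \<alpha>})
        = (\<Sum>i\<in>{i. i < n \<and> \<theta>s i = \<theta>0}. measure (K0 i) A)"
      using comp by (intro sum.cong refl) auto
    also have "\<dots> \<le> (\<Sum>i<n. measure (K0 i) A)"
      by (intro sum_mono2) auto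
    also have "\<dots> \<le> \<alpha> * real n"
    proof -
      have "ennreal (\<Sum>i<n. measure (K0 i) A) = (\<Sum>i<n. emeasure (K0 i) A)"
        using kernel_prob by (simp add: K0_def finite_measure.emeasure_eq_measure prob_space.finite_measure)
      also have "\<dots> \<le> ennreal \<alpha> * ennreal (real n)"
        using main[OF A_def] \<alpha> by simp
      also have "\<dots> = ennreal (\<alpha> * real n)" using \<alpha> by (simp add: ennreal_mult)
      finally show ?thesis using \<alpha> by (simp add: ennreal_le_iff)
    qed
    finally have "(1 / real n) * (\<Sum>i\<in>{i. i < n \<and> \<theta>s i = \<theta>0}. measure (PiM {..<n} M') {\<omega> \<in> space (PiM {..<n} M'). Por (fst (\<omega> i)) (snd (\<omega> i)) \<le> \<alpha>}) \<le> \<alpha>"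
      using n_pos by (simp add: field_simps)
    then show "max ((1 / real n) *
                 (\<Sum>i\<in>{i. i < n \<and> \<theta>s i = \<theta>0}.
                    measure (PiM {..<n} (\<lambda>i. K (\<theta>s i) (\<nu>s i)))
                      {\<omega> \<in> space (PiM {..<n} (\<lambda>i. K (\<theta>s i) (\<nu>s i))).
                         Por (fst (\<omega> i)) (snd (\<omega> i)) \<le> \<alpha>}) - \<alpha>) 0 \<le> 0"
      unfolding M'_def by simp
  qed
qed

end
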